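(* For any integer $d\geq 2$, Kůrka's dichotomy fails on the free group $\mathbb{F}_d$ on $d$ generators: there exist a finite alphabet $A$ and a cellular automaton on $\mathbb{F}_d$ with alphabet $A$ which is not sensitive to initial conditions and has no equicontinuity point.
   Context: For a finitely generated group $\Gamma$ with finite generating set $E$ closed under inverses, let $d_E$ be the word metric and define the Cantor metric on $A^\Gamma$ ($A$ a finite alphabet) by $d^E(x,y)=2^{-k}$ with $k=\min\{d_E(1,g): x(g)\neq y(g)\}$; $B^E(x,r)$ is its closed ball. A cellular automaton (CA) on $\Gamma$ with alphabet $A$ is a map $\Phi:A^\Gamma\to A^\Gamma$ given by a finite $S\subseteq\Gamma$ and $\mu:A^S\to A$ via $\Phi(x)(g)=\mu(s\mapsto x(gs))$. $x$ is an equicontinuity point of $\Phi$ if $\forall\epsilon>0\,\exists\delta>0\,\forall t\in\mathbb{N}$, $\Phi^t(B^E(x,\delta))\subseteq B^E(\Phi^t(x),\epsilon)$. $\Phi$ is sensitive to initial conditions if $\exists\epsilon>0\,\forall x\,\forall\delta>0\,\exists t\in\mathbb{N}\,\exists y\in B^E(x,\delta)$ with $\Phi^t(y)\notin B^E(\Phi^t(x),\epsilon)$. These notions do not depend on $E$. Kůrka's dichotomy holds on $\Gamma$ if every CA on $\Gamma$ (any finite alphabet) that is not sensitive has an equicontinuity point. *)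

theory Defs
  imports Complex_Main "HOL-Library.FuncSet"
begin

text \<open>A letter (i, True) is the generator a_i, (i, False) is its inverse.
  Elements of F_d are the freely reduced words over a_0,...,a_{d-1} and
  their inverses; the identity is the empty word.\<close>

type_synonym fgword = "(nat \<times> bool) list"

definition cancels :: "nat \<times> bool \<Rightarrow> nat \<times> bool \<Rightarrow> bool" where
  "cancels a b \<longleftrightarrow> fst a = fst b \<and> snd a \<noteq> snd b"

fun reduced :: "fgword \<Rightarrow> bool" where
  "reduced [] = True"
| "reduced [a] = True"
| "reduced (a # b # w) = (\<not> cancels a b \<and> reduced (b # w))"

definition fg_carrier :: "nat \<Rightarrow> fgword set" where
  "fg_carrier d = {w. reduced w \<and> (\<forall>a \<in> set w. fst a < d)}"

text \<open>Free reduction with a stack (the stack holds the reversed reduced prefix).\<close>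
definition red_step :: "fgword \<Rightarrow> nat \<times> bool \<Rightarrow> fgword" where
  "red_step st x = (case st of [] \<Rightarrow> [x]
       | a # st' \<Rightarrow> (if cancels a x then st' else x # st))"

definition reduce :: "fgword \<Rightarrow> fgword" where
  "reduce w = rev (foldl red_step [] w)"

definition fg_mult :: "fgword \<Rightarrow> fgword \<Rightarrow> fgword" where
  "fg_mult g h = reduce (g @ h)"

definition word_len :: "fgword \<Rightarrow> nat" where
  "word_len g = length g"

definition configs :: "nat \<Rightarrow> nat set \<Rightarrow> (fgword \<Rightarrow> nat) set" where
  "configs d A = {x. \<forall>g \<in> fg_carrier d. x g \<in> A}"

definition cdist :: "nat \<Rightarrow> (fgword \<Rightarrow> nat) \<Rightarrow> (fgword \<Rightarrow> nat) \<Rightarrow> real" where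
  "cdist d x y =
     (if \<forall>g \<in> fg_carrier d. x g = y g then 0
      else (1/2) ^ (LEAST k. \<exists>g \<in> fg_carrier d. word_len g = k \<and> x g \<noteq> y g))"

definition cball_c :: "nat \<Rightarrow> nat set \<Rightarrow> (fgword \<Rightarrow> nat) \<Rightarrow> real \<Rightarrow> (fgword \<Rightarrow> nat) set" where
  "cball_c d A x r = {y \<in> configs d A. cdist d x y \<le> r}"

definition local_rule :: "nat set \<Rightarrow> fgword set \<Rightarrow> ((fgword \<Rightarrow> nat) \<Rightarrow> nat) \<Rightarrow> bool" where
  "local_rule A S \<mu> \<longleftrightarrow> (\<forall>p \<in> S \<rightarrow>\<^sub>E A. \<mu> p \<in> A)"

definition ca :: "fgword set \<Rightarrow> ((fgword \<Rightarrow> nat) \<Rightarrow> nat) \<Rightarrow> (fgword \<Rightarrow> nat) \<Rightarrow> (fgword \<Rightarrow> nat)" where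
  "ca S \<mu> x = (\<lambda>g. \<mu> (\<lambda>s \<in> S. x (fg_mult g s)))"

definition equicont_point ::
  "nat \<Rightarrow> nat set \<Rightarrow> ((fgword \<Rightarrow> nat) \<Rightarrow> (fgword \<Rightarrow> nat)) \<Rightarrow> (fgword \<Rightarrow> nat) \<Rightarrow> bool" where
  "equicont_point d A \<Phi> x \<longleftrightarrow>
     (\<forall>\<epsilon>>0. \<exists>\<delta>>0. \<forall>t::nat.
        (\<Phi> ^^ t) ` cball_c d A x \<delta> \<subseteq> cball_c d A ((\<Phi> ^^ t) x) \<epsilon>)"

definition sensitive ::
  "nat \<Rightarrow> nat set \<Rightarrow> ((fgword \<Rightarrow> nat) \<Rightarrow> (fgword \<Rightarrow> nat)) \<Rightarrow> bool" where
  "sensitive d A \<Phi> \<longleftrightarrow>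
     (\<exists>\<epsilon>>0. \<forall>x \<in> configs d A. \<forall>\<delta>>0. \<exists>t::nat. \<exists>y \<in> cball_c d A x \<delta>.
        (\<Phi> ^^ t) y \<notin> cball_c d A ((\<Phi> ^^ t) x) \<epsilon>)"

end

theory Submission
  imports Defs
begin


definition inv_l :: "nat \<times> bool \<Rightarrow> nat \<times> bool" where
  "inv_l l = (fst l, \<not> snd l)"

lemma inv_inv[simp]: "inv_l (inv_l l) = l"
  by (cases l) (simp add: inv_l_def)

lemma fst_inv[simp]: "fst (inv_l l) = fst l"
  by (simp add: inv_l_def)

lemma cancels_iff: "cancels a b \<longleftrightarrow> a = inv_l b"
  by (cases a; cases b) (auto simp: cancels_def inv_l_def)

lemma cancels_sym: "cancels a b \<longleftrightarrow> cancels b a"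
  by (auto simp: cancels_def)

lemma reduced_Cons: "reduced (a # w) \<longleftrightarrow> reduced w \<and> (w \<noteq> [] \<longrightarrow> \<not> cancels a (hd w))"
  by (cases w) auto

lemma reduced_append: "reduced (xs @ ys) \<longleftrightarrow> reduced xs \<and> reduced ys \<and> (xs \<noteq> [] \<and> ys \<noteq> [] \<longrightarrow> \<not> cancels (last xs) (hd ys))"
proof (induction xs)
  case Nil then show ?case by simp
next
  case (Cons a xs)
  show ?case
  proof (cases xs)
    case Nil then show ?thesis by (simp add: reduced_Cons)
  next
    case (Cons b xs')
    have "reduced (a # xs @ ys) = (reduced (xs @ ys) \<and> \<not> cancels a b)"
      using Cons by (simp add: reduced_Cons)
    also have "\<dots> = ((reduced xs \<and> reduced ys \<and> (ys \<noteq> [] \<longrightarrow> \<not> cancels (last xs) (hd ys))) \<and> \<not> cancels a b)"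
      using Cons Cons.IH by simp
    also have "\<dots> = (reduced (a # xs) \<and> reduced ys \<and> (a # xs \<noteq> [] \<and> ys \<noteq> [] \<longrightarrow> \<not> cancels (last (a # xs)) (hd ys)))"
      using Cons by (auto simp: reduced_Cons)
    finally show ?thesis by simp
  qed
qed

lemma reduced_snoc: "reduced (xs @ [a]) \<longleftrightarrow> reduced xs \<and> (xs \<noteq> [] \<longrightarrow> \<not> cancels (last xs) a)"
  by (simp add: reduced_append)

definition rr :: "fgword \<Rightarrow> bool" where "rr st = reduced (rev st)"

lemma rr_Nil[simp]: "rr []" by (simp add: rr_def)

lemma rr_red_step: "rr st \<Longrightarrow> rr (red_step st l)"
  by (cases st) (auto simp: rr_def red_step_def reduced_snoc reduced_append)

lemma rr_foldl: "rr st \<Longrightarrow> rr (foldl red_step st w)"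
  by (induction w arbitrary: st) (auto simp: rr_red_step)

lemma reduced_reduce: "reduced (reduce w)"
  using rr_foldl[of "[]" w] by (simp add: rr_def reduce_def)

lemma foldl_reduced: "reduced w \<Longrightarrow> foldl red_step [] w = rev w"
proof (induction w rule: rev_induct)
  case Nil then show ?case by simp
next
  case (snoc a w)
  then have rw: "reduced w" and nc: "w \<noteq> [] \<longrightarrow> \<not> cancels (last w) a"
    by (auto simp: reduced_snoc)
  have "foldl red_step [] (w @ [a]) = red_step (rev w) a" using snoc.IH rw by simp
  also have "\<dots> = a # rev w"
    using nc by (cases "rev w") (auto simp: red_step_def last_rev[symmetric] split: if_splits)
  finally show ?case by simp
qed

lemma reduce_reduced: "reduced w \<Longrightarrow> reduce w = w"
  by (simp add: reduce_def foldl_reduced)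

lemma rev_reduce: "rev (reduce w) = foldl red_step [] w"
  by (simp add: reduce_def)

definition mul1 :: "fgword \<Rightarrow> nat \<times> bool \<Rightarrow> fgword" where
  "mul1 g l = rev (red_step (rev g) l)"

lemma mul1_eq_reduce: "reduced g \<Longrightarrow> mul1 g l = reduce (g @ [l])"
  by (simp add: mul1_def reduce_def foldl_reduced)

lemma fg_mult_single: "reduced g \<Longrightarrow> fg_mult g [l] = mul1 g l"
  by (simp add: fg_mult_def mul1_eq_reduce)

lemma fg_mult_Nil: "reduced g \<Longrightarrow> fg_mult g [] = g"
  by (simp add: fg_mult_def reduce_reduced)

lemma reduced_mul1: "reduced g \<Longrightarrow> reduced (mul1 g l)"
  using rr_red_step[of "rev g" l] by (simp add: rr_def mul1_def)

lemma set_red_step: "set (red_step st l) \<subseteq> insert l (set st)"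
  by (cases st) (auto simp: red_step_def)

lemma set_mul1: "set (mul1 g l) \<subseteq> insert l (set g)"
  using set_red_step[of "rev g" l] by (simp add: mul1_def)

lemma mul1_carrier: "g \<in> fg_carrier d \<Longrightarrow> fst l < d \<Longrightarrow> mul1 g l \<in> fg_carrier d"
  using set_mul1[of g l] reduced_mul1[of g l] by (auto simp: fg_carrier_def)

lemma red_step_inv: "rr st \<Longrightarrow> red_step (red_step st l) (inv_l l) = st"
proof (cases st)
  case Nil then show ?thesis by (simp add: red_step_def cancels_iff)
next
  case (Cons a st')
  assume "rr st"
  show ?thesis
  proof (cases "cancels a l")
    case True
    then have al: "a = inv_l l" by (simp add: cancels_iff)
    show ?thesis
    proof (cases st')
      case Nil then show ?thesis using Cons True al by (simp add: red_step_def)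
    next
      case (Cons b st'')
      from \<open>rr st\<close> have "\<not> cancels b a"
        using \<open>st = a # st'\<close> Cons by (simp add: rr_def reduced_append cancels_sym)
      then have "\<not> cancels b (inv_l l)" using al by simp
      then show ?thesis using \<open>st = a # st'\<close> Cons True al by (simp add: red_step_def)
    qed
  next
    case False
    then show ?thesis using Cons by (simp add: red_step_def cancels_iff)
  qed
qed

lemma mul1_inv: "reduced g \<Longrightarrow> mul1 (mul1 g l) (inv_l l) = g"
  using red_step_inv[of "rev g" l] by (simp add: mul1_def rr_def)

lemma length_red_step: "length (red_step st l) = (if st \<noteq> [] \<and> cancels (hd st) l then length st - 1 else length st + 1)"
  by (cases st) (auto simp: red_step_def)

lemma length_mul1: "length (mul1 g l) = (if g \<noteq> [] \<and> cancels (last g) l then length g - 1 else length g + 1)"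
  by (simp add: mul1_def length_red_step hd_rev)

lemma mul1_noncancel: "\<not> (g \<noteq> [] \<and> cancels (last g) l) \<Longrightarrow> mul1 g l = g @ [l]"
  by (cases "rev g") (auto simp: mul1_def red_step_def hd_rev[symmetric])

lemma length_reduce: "length (reduce w) \<le> length w"
proof -
  have "length (foldl red_step st w) \<le> length st + length w" for st
  proof (induction w arbitrary: st)
    case Nil then show ?case by simp
  next
    case (Cons a w)
    have "length (red_step st a) \<le> length st + 1" by (auto simp: length_red_step)
    then show ?case using Cons.IH[of "red_step st a"] by simp
  qed
  then show ?thesis using rev_reduce[of w] by (metis add_0 length_rev list.size(3))
qed

lemma foldl_reduce_eq: "rr st \<Longrightarrow> foldl red_step st p = foldl red_step st (reduce p)"
proof (induction p rule: rev_induct)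
  case Nil then show ?case by (simp add: reduce_def)
next
  case (snoc l p')
  let ?q = "reduce p'"
  have rq: "reduced ?q" by (rule reduced_reduce)
  have "foldl red_step st (p' @ [l]) = red_step (foldl red_step st ?q) l"
    using snoc by simp
  also have "\<dots> = foldl red_step st (rev (red_step (rev ?q) l))"
  proof (cases "rev ?q")
    case Nil then show ?thesis by (simp add: red_step_def)
  next
    case (Cons a r)
    then have qa: "?q = rev r @ [a]" by (metis rev_rev_ident rev.simps(2))
    show ?thesis
    proof (cases "cancels a l")
      case True
      then have la: "l = inv_l a" by (simp add: cancels_iff)
      have "red_step (foldl red_step st ?q) l = red_step (red_step (foldl red_step st (rev r)) a) (inv_l a)"
        using qa la by simp
      also have "\<dots> = foldl red_step st (rev r)"
        by (rule red_step_inv) (rule rr_foldl[OF snoc.prems])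
      finally have e1: "red_step (foldl red_step st ?q) l = foldl red_step st (rev r)" .
      have "red_step (rev ?q) l = r" using Cons True by (simp add: red_step_def)
      then show ?thesis using e1 by simp
    next
      case False
      then show ?thesis using Cons by (simp add: red_step_def)
    qed
  qed
  also have "rev (red_step (rev ?q) l) = reduce (p' @ [l])"
    by (simp add: reduce_def)
  finally show ?case .
qed

lemma reduce_append_reduce: "reduce (p @ reduce q) = reduce (p @ q)"
proof -
  have "foldl red_step (foldl red_step [] p) q = foldl red_step (foldl red_step [] p) (reduce q)"
    by (rule foldl_reduce_eq) (rule rr_foldl, simp)
  then show ?thesis by (simp add: reduce_def)
qed

lemma reduce_mul1: "reduced v \<Longrightarrow> reduce (p @ mul1 v l) = mul1 (reduce (p @ v)) l"
proof -
  assume rv: "reduced v"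
  have "reduce (p @ mul1 v l) = reduce (p @ v @ [l])"
    using rv by (simp add: mul1_eq_reduce reduce_append_reduce)
  also have "\<dots> = rev (red_step (foldl red_step [] (p @ v)) l)"
    by (simp add: reduce_def)
  also have "\<dots> = mul1 (reduce (p @ v)) l"
    by (simp add: mul1_def rev_reduce)
  finally show ?thesis .
qed

definition winv :: "fgword \<Rightarrow> fgword" where "winv w = rev (map inv_l w)"

lemma foldl_winv: "rr st \<Longrightarrow> foldl red_step st (winv f @ f) = st"
proof (induction f arbitrary: st)
  case Nil then show ?case by (simp add: winv_def)
next
  case (Cons a f)
  have "foldl red_step st (winv (a # f) @ a # f) = foldl red_step (red_step (red_step (foldl red_step st (winv f)) (inv_l a)) a) f"
    by (simp add: winv_def)
  also have "red_step (red_step (foldl red_step st (winv f)) (inv_l a)) a = foldl red_step st (winv f)"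
    using red_step_inv[of "foldl red_step st (winv f)" "inv_l a"] rr_foldl[OF Cons.prems] by simp
  also have "foldl red_step (foldl red_step st (winv f)) f = st"
    using Cons by simp
  finally show ?case .
qed

lemma reduce_winv: "reduce (winv f @ f) = []"
  using foldl_winv[of "[]" f] by (simp add: reduce_def)



definition E :: "nat \<Rightarrow> (nat \<times> bool) set" where "E d = {l. fst l < d}"

lemma E_eq: "E d = {0..<d} \<times> UNIV"
  by (auto simp: E_def)

lemma finite_E[simp]: "finite (E d)"
  by (simp add: E_eq)

lemma inv_E[simp]: "inv_l l \<in> E d \<longleftrightarrow> l \<in> E d"
  by (simp add: E_def)

definition lc :: "nat \<times> bool \<Rightarrow> nat" where
  "lc l = 2 * fst l + (if snd l then 1 else 0)"

lemma lc_inj: "lc a = lc b \<Longrightarrow> a = b"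
  by (cases a; cases b) (auto simp: lc_def split: if_splits; presburger)

lemma lc_bound: "l \<in> E d \<Longrightarrow> lc l < 2 * d"
  by (cases l) (auto simp: lc_def E_def)

definition seal :: "nat \<Rightarrow> nat \<Rightarrow> nat \<times> bool \<Rightarrow> bool" where
  "seal c n l \<longleftrightarrow> (c div 2 = 0 \<and> n div 2 = 2 + lc (inv_l l)) \<or> (c div 2 = 2 + lc l \<and> n div 2 = 0)"

definition badn :: "nat \<Rightarrow> (nat \<times> bool \<Rightarrow> nat) \<Rightarrow> bool" where
  "badn d nb \<longleftrightarrow> (\<exists>l \<in> E d. nb l div 2 \<noteq> 0 \<and> nb l div 2 \<noteq> 2 + lc (inv_l l))"

definition nsh :: "nat \<Rightarrow> nat \<Rightarrow> (nat \<times> bool \<Rightarrow> nat) \<Rightarrow> nat" where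
  "nsh d c nb = (if c div 2 = 0 then (if badn d nb then 1 else 0) else c div 2)"

definition nbit :: "nat \<Rightarrow> nat \<Rightarrow> (nat \<times> bool \<Rightarrow> nat) \<Rightarrow> nat" where
  "nbit d c nb = card {l \<in> E d. \<not> seal c (nb l) l \<and> odd (nb l)} mod 2"

definition rule :: "nat \<Rightarrow> nat \<Rightarrow> (nat \<times> bool \<Rightarrow> nat) \<Rightarrow> nat" where
  "rule d c nb = 2 * nsh d c nb + nbit d c nb"

lemma nbit_lt: "nbit d c nb < 2"
  by (simp add: nbit_def)

lemma rule_div2[simp]: "rule d c nb div 2 = nsh d c nb"
  using nbit_lt[of d c nb] by (simp add: rule_def)

lemma rule_mod2[simp]: "rule d c nb mod 2 = nbit d c nb"
  using nbit_lt[of d c nb] by (simp add: rule_def)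

lemma rule_cong: "(\<And>l. l \<in> E d \<Longrightarrow> nb l = nb' l) \<Longrightarrow> rule d c nb = rule d c nb'"
proof -
  assume h: "\<And>l. l \<in> E d \<Longrightarrow> nb l = nb' l"
  have "{l \<in> E d. \<not> seal c (nb l) l \<and> odd (nb l)} = {l \<in> E d. \<not> seal c (nb' l) l \<and> odd (nb' l)}"
    using h by auto
  moreover have "badn d nb = badn d nb'" using h by (auto simp: badn_def)
  ultimately show ?thesis by (simp add: rule_def nbit_def nsh_def)
qed

definition Sd :: "nat \<Rightarrow> fgword set" where "Sd d = insert [] ((\<lambda>l. [l]) ` E d)"

definition mu :: "nat \<Rightarrow> (fgword \<Rightarrow> nat) \<Rightarrow> nat" where
  "mu d p = rule d (p []) (\<lambda>l. p [l])"

definition Ad :: "nat \<Rightarrow> nat set" where "Ad d = {..< 4 * d + 4}"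

abbreviation Phi :: "nat \<Rightarrow> (fgword \<Rightarrow> nat) \<Rightarrow> (fgword \<Rightarrow> nat)" where
  "Phi d \<equiv> ca (Sd d) (mu d)"

lemma finite_Sd: "finite (Sd d)"
  by (simp add: Sd_def)

lemma Sd_carrier: "Sd d \<subseteq> fg_carrier d"
  by (auto simp: Sd_def fg_carrier_def E_def)

lemma carrier_reduced: "g \<in> fg_carrier d \<Longrightarrow> reduced g"
  by (simp add: fg_carrier_def)

lemma mul1_carrier_E: "g \<in> fg_carrier d \<Longrightarrow> l \<in> E d \<Longrightarrow> mul1 g l \<in> fg_carrier d"
  by (simp add: mul1_carrier E_def)

lemma Phi_eval: "g \<in> fg_carrier d \<Longrightarrow> Phi d x g = rule d (x g) (\<lambda>l. x (mul1 g l))"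
proof -
  assume g: "g \<in> fg_carrier d"
  have rg: "reduced g" using g by (simp add: fg_carrier_def)
  have "Phi d x g = rule d (x (fg_mult g [])) (\<lambda>l. (\<lambda>s\<in>Sd d. x (fg_mult g s)) [l])"
    by (simp add: ca_def mu_def Sd_def)
  also have "\<dots> = rule d (x g) (\<lambda>l. (\<lambda>s\<in>Sd d. x (fg_mult g s)) [l])"
    using rg by (simp add: fg_mult_Nil)
  also have "\<dots> = rule d (x g) (\<lambda>l. x (mul1 g l))"
    using rg by (intro rule_cong) (auto simp: Sd_def fg_mult_single)
  finally show ?thesis .
qed

lemma nsh_bound: "c < 4 * d + 4 \<Longrightarrow> nsh d c nb \<le> 2 * d + 1"
  by (auto simp: nsh_def)

lemma rule_range: "c < 4 * d + 4 \<Longrightarrow> rule d c nb < 4 * d + 4"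
  using nsh_bound[of c d nb] nbit_lt[of d c nb] by (simp add: rule_def)

lemma local_rule_mu: "local_rule (Ad d) (Sd d) (mu d)"
proof (unfold local_rule_def, intro ballI)
  fix p assume p: "p \<in> Sd d \<rightarrow>\<^sub>E Ad d"
  have "p [] \<in> Ad d" using p by (auto simp: Sd_def)
  then show "mu d p \<in> Ad d" by (simp add: mu_def Ad_def rule_range)
qed

lemma Phi_configs: "x \<in> configs d (Ad d) \<Longrightarrow> Phi d x \<in> configs d (Ad d)"
  by (auto simp: configs_def Phi_eval Ad_def rule_range)

lemma Phi_pow_configs: "x \<in> configs d (Ad d) \<Longrightarrow> (Phi d ^^ t) x \<in> configs d (Ad d)"
  by (induction t) (auto simp: Phi_configs)

lemma nsh_O: "c div 2 \<noteq> 0 \<Longrightarrow> nsh d c nb = c div 2"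
  by (simp add: nsh_def)

lemma nsh_bad: "c div 2 = 0 \<Longrightarrow> l \<in> E d \<Longrightarrow> nb l div 2 \<noteq> 0 \<Longrightarrow> nb l div 2 \<noteq> 2 + lc (inv_l l) \<Longrightarrow> nsh d c nb = 1"
  by (auto simp: nsh_def badn_def)

lemma nsh_I_O: "c div 2 = 0 \<Longrightarrow> nsh d c nb \<noteq> 0 \<Longrightarrow> nsh d c nb = 1"
  by (auto simp: nsh_def split: if_splits)

lemma nsh_good: "c div 2 = 0 \<Longrightarrow> (\<And>l. l \<in> E d \<Longrightarrow> nb l div 2 = 0 \<or> nb l div 2 = 2 + lc (inv_l l)) \<Longrightarrow> nsh d c nb = 0"
  by (auto simp: nsh_def badn_def)

lemma nsh_dep: "c div 2 = c' div 2 \<Longrightarrow> (\<And>l. l \<in> E d \<Longrightarrow> nb l div 2 = nb' l div 2) \<Longrightarrow> nsh d c nb = nsh d c' nb'"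
proof -
  assume a: "c div 2 = c' div 2" and b: "\<And>l. l \<in> E d \<Longrightarrow> nb l div 2 = nb' l div 2"
  have "badn d nb = badn d nb'" using b by (auto simp: badn_def)
  then show ?thesis using a by (simp add: nsh_def)
qed

lemma card_split2:
  assumes "finite C"
  shows "card {l \<in> C. p l} = card {l \<in> C. p l \<and> q l} + card {l \<in> C. p l \<and> \<not> q l}"
proof -
  have e: "{l \<in> C. p l} = {l \<in> C. p l \<and> q l} \<union> {l \<in> C. p l \<and> \<not> q l}" by auto
  have "card ({l \<in> C. p l \<and> q l} \<union> {l \<in> C. p l \<and> \<not> q l}) = card {l \<in> C. p l \<and> q l} + card {l \<in> C. p l \<and> \<not> q l}"
    by (rule card_Un_disjoint) (use assms in auto)
  then show ?thesis using e by simp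
qed

lemma card_parity:
  assumes "finite C"
  shows "card {l \<in> C. p l} + card {l \<in> C. q l} = card {l \<in> C. p l \<noteq> q l} + 2 * card {l \<in> C. p l \<and> q l}"
proof -
  have 1: "card {l \<in> C. p l} = card {l \<in> C. p l \<and> q l} + card {l \<in> C. p l \<and> \<not> q l}"
    by (rule card_split2[OF assms])
  have 2: "card {l \<in> C. q l} = card {l \<in> C. q l \<and> p l} + card {l \<in> C. q l \<and> \<not> p l}"
    by (rule card_split2[OF assms])
  have 3: "card {l \<in> C. p l \<noteq> q l} = card {l \<in> C. (p l \<noteq> q l) \<and> p l} + card {l \<in> C. (p l \<noteq> q l) \<and> \<not> p l}"
    by (rule card_split2[OF assms])
  have e1: "{l \<in> C. q l \<and> p l} = {l \<in> C. p l \<and> q l}" by auto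
  have e2: "{l \<in> C. (p l \<noteq> q l) \<and> p l} = {l \<in> C. p l \<and> \<not> q l}" by auto
  have e3: "{l \<in> C. (p l \<noteq> q l) \<and> \<not> p l} = {l \<in> C. q l \<and> \<not> p l}" by auto
  show ?thesis using 1 2 3 unfolding e1 e2 e3 by simp
qed

lemma rule_bit_diff:
  assumes "c div 2 = c' div 2" and "\<And>l. l \<in> E d \<Longrightarrow> nb l div 2 = nb' l div 2"
  shows "(rule d c nb mod 2 \<noteq> rule d c' nb' mod 2) \<longleftrightarrow>
         odd (card {l \<in> E d. \<not> seal c (nb l) l \<and> nb l mod 2 \<noteq> nb' l mod 2})"
proof -
  have sl: "l \<in> E d \<Longrightarrow> seal c' (nb' l) l = seal c (nb l) l" for l
    using assms by (simp add: seal_def)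
  let ?C = "{l \<in> E d. \<not> seal c (nb l) l}"
  have fC: "finite ?C" by simp
  have e1: "{l \<in> E d. \<not> seal c (nb l) l \<and> odd (nb l)} = {l \<in> ?C. odd (nb l)}" by auto
  have e2: "{l \<in> E d. \<not> seal c' (nb' l) l \<and> odd (nb' l)} = {l \<in> ?C. odd (nb' l)}" using sl by auto
  have mm: "(a mod 2 \<noteq> b mod 2) = (odd a \<noteq> odd b)" for a b :: nat
    by (auto simp: even_iff_mod_2_eq_zero)
  have e3: "{l \<in> E d. \<not> seal c (nb l) l \<and> nb l mod 2 \<noteq> nb' l mod 2} = {l \<in> ?C. odd (nb l) \<noteq> odd (nb' l)}"
    using mm by auto
  have p: "card {l \<in> ?C. odd (nb l)} + card {l \<in> ?C. odd (nb' l)} = card {l \<in> ?C. odd (nb l) \<noteq> odd (nb' l)} + 2 * card {l \<in> ?C. odd (nb l) \<and> odd (nb' l)}"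
    by (rule card_parity[OF fC])
  have q: "a + b = c + 2 * k \<Longrightarrow> (a mod 2 \<noteq> b mod 2) = odd c" for a b c k :: nat
  proof -
    assume h: "a + b = c + 2 * k"
    have "even (a + b) = even (c + 2 * k)" using h by simp
    then have "even (a + b) = even c" by simp
    then show ?thesis using mm[of a b] by simp
  qed
  have r1: "rule d c nb mod 2 = card {l \<in> ?C. odd (nb l)} mod 2"
    by (simp only: rule_mod2 nbit_def e1)
  have r2: "rule d c' nb' mod 2 = card {l \<in> ?C. odd (nb' l)} mod 2"
    by (simp only: rule_mod2 nbit_def e2)
  have "(rule d c nb mod 2 \<noteq> rule d c' nb' mod 2) = (card {l \<in> ?C. odd (nb l)} mod 2 \<noteq> card {l \<in> ?C. odd (nb' l)} mod 2)"
    unfolding r1 r2 by (rule refl)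
  also have "\<dots> = odd (card {l \<in> ?C. odd (nb l) \<noteq> odd (nb' l)})"
    by (rule q[OF p])
  also have "\<dots> = odd (card {l \<in> E d. \<not> seal c (nb l) l \<and> nb l mod 2 \<noteq> nb' l mod 2})"
    unfolding e3 by (rule refl)
  finally show ?thesis .
qed



lemma half_pow_mono: "m \<le> n \<Longrightarrow> (1/2::real) ^ n \<le> (1/2) ^ m"
  by (rule power_decreasing) auto

lemma cdist_le:
  assumes "\<And>g. g \<in> fg_carrier d \<Longrightarrow> length g \<le> n \<Longrightarrow> x g = y g"
  shows "cdist d x y \<le> (1/2) ^ Suc n"
proof (cases "\<forall>g \<in> fg_carrier d. x g = y g")
  case True then show ?thesis by (simp add: cdist_def)
next
  case False
  then obtain g where g: "g \<in> fg_carrier d" "x g \<noteq> y g" by auto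
  let ?P = "\<lambda>k. \<exists>g \<in> fg_carrier d. word_len g = k \<and> x g \<noteq> y g"
  have ex: "?P (word_len g)" using g by auto
  have "?P (LEAST k. ?P k)" by (rule LeastI[of ?P, OF ex])
  then obtain h where h: "h \<in> fg_carrier d" "word_len h = (LEAST k. ?P k)" "x h \<noteq> y h" by auto
  have "Suc n \<le> (LEAST k. ?P k)" using h assms[of h] by (force simp: word_len_def)
  then have "(1/2::real) ^ (LEAST k. ?P k) \<le> (1/2) ^ Suc n" by (rule half_pow_mono)
  then show ?thesis using False by (simp add: cdist_def)
qed

lemma cdist_ge:
  assumes "g \<in> fg_carrier d" "x g \<noteq> y g"
  shows "(1/2) ^ length g \<le> cdist d x y"
proof -
  let ?P = "\<lambda>k. \<exists>g \<in> fg_carrier d. word_len g = k \<and> x g \<noteq> y g"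
  have ex: "?P (length g)" using assms by (auto simp: word_len_def)
  have "(LEAST k. ?P k) \<le> length g" by (rule Least_le[of ?P, OF ex])
  then have le: "(1/2::real) ^ length g \<le> (1/2) ^ (LEAST k. ?P k)" by (rule half_pow_mono)
  have ne: "\<not> (\<forall>g \<in> fg_carrier d. x g = y g)" using assms by auto
  show ?thesis unfolding cdist_def if_not_P[OF ne] by (rule le)
qed

lemma cdist_agree:
  assumes "cdist d x y \<le> (1/2) ^ Suc n" "g \<in> fg_carrier d" "length g \<le> n"
  shows "x g = y g"
proof (rule ccontr)
  assume ne: "x g \<noteq> y g"
  have "(1/2) ^ length g \<le> cdist d x y" by (rule cdist_ge[of g d x y, OF assms(2) ne])
  moreover have "(1/2::real) ^ n \<le> (1/2) ^ length g" using assms(3) by (rule half_pow_mono)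
  moreover have "(1/2::real) ^ Suc n < (1/2) ^ n" by simp
  ultimately show False using assms(1) by linarith
qed

definition xr :: "nat \<Rightarrow> fgword \<Rightarrow> nat" where
  "xr \<rho> v = (if length v \<le> \<rho> then 0 else if length v = Suc \<rho> then 2 * (2 + lc (inv_l (last v))) else 2)"

lemma xr_configs: "xr \<rho> \<in> configs d (Ad d)"
proof -
  have "xr \<rho> v < 4 * d + 4" if v: "v \<in> fg_carrier d" for v
  proof (cases "length v = Suc \<rho>")
    case True
    then have "v \<noteq> []" by auto
    then have "last v \<in> set v" by simp
    then have "fst (last v) < d" using v by (auto simp: fg_carrier_def)
    then have "lc (inv_l (last v)) < 2 * d" by (intro lc_bound) (simp add: E_def)
    then show ?thesis by (simp add: xr_def)
  next
    case False then show ?thesis by (simp add: xr_def)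
  qed
  then show ?thesis by (simp add: configs_def Ad_def)
qed

definition Hinv :: "nat \<Rightarrow> nat \<Rightarrow> (fgword \<Rightarrow> nat) \<Rightarrow> (fgword \<Rightarrow> nat) \<Rightarrow> bool" where
  "Hinv d \<rho> z1 z2 \<longleftrightarrow> (\<forall>v \<in> fg_carrier d.
      (length v \<le> Suc \<rho> \<longrightarrow> z1 v div 2 = xr \<rho> v div 2 \<and> z2 v div 2 = xr \<rho> v div 2) \<and>
      (length v \<le> \<rho> \<longrightarrow> z1 v = z2 v))"

lemma nbr_shape:
  assumes v: "v \<in> fg_carrier d" "length v \<le> \<rho>" and l: "l \<in> E d"
  shows "length (mul1 v l) \<le> \<rho> \<and> xr \<rho> (mul1 v l) div 2 = 0 \<or>
         length (mul1 v l) = Suc \<rho> \<and> xr \<rho> (mul1 v l) div 2 = 2 + lc (inv_l l)"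
proof (cases "v \<noteq> [] \<and> cancels (last v) l")
  case True
  then have "length (mul1 v l) = length v - 1" by (simp add: length_mul1)
  then show ?thesis using v by (simp add: xr_def)
next
  case False
  then have e: "mul1 v l = v @ [l]" by (rule mul1_noncancel)
  show ?thesis
  proof (cases "length v = \<rho>")
    case True then show ?thesis using e by (simp add: xr_def)
  next
    case False then show ?thesis using e v by (simp add: xr_def)
  qed
qed

lemma Hinv_step:
  assumes H: "Hinv d \<rho> z1 z2"
  shows "Hinv d \<rho> (Phi d z1) (Phi d z2)"
proof -
  have "(length v \<le> Suc \<rho> \<longrightarrow> Phi d z1 v div 2 = xr \<rho> v div 2 \<and> Phi d z2 v div 2 = xr \<rho> v div 2) \<and>
        (length v \<le> \<rho> \<longrightarrow> Phi d z1 v = Phi d z2 v)" if v: "v \<in> fg_carrier d" for v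
  proof (cases "length v \<le> \<rho>")
    case False
    show ?thesis
    proof (rule conjI)
      show "length v \<le> Suc \<rho> \<longrightarrow> Phi d z1 v div 2 = xr \<rho> v div 2 \<and> Phi d z2 v div 2 = xr \<rho> v div 2"
      proof
        assume "length v \<le> Suc \<rho>"
        then have lv: "length v = Suc \<rho>" using False by simp
        then have nz: "xr \<rho> v div 2 \<noteq> 0" by (simp add: xr_def)
        have "z1 v div 2 = xr \<rho> v div 2" "z2 v div 2 = xr \<rho> v div 2" using H v lv by (auto simp: Hinv_def)
        then show "Phi d z1 v div 2 = xr \<rho> v div 2 \<and> Phi d z2 v div 2 = xr \<rho> v div 2"
          using nz v by (simp add: Phi_eval nsh_O)
      qed
    next
      show "length v \<le> \<rho> \<longrightarrow> Phi d z1 v = Phi d z2 v" using False by simp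
    qed
  next
    case True
    have x0: "xr \<rho> v div 2 = 0" using True by (simp add: xr_def)
    have c1: "z1 v div 2 = 0" "z2 v div 2 = 0" and ceq: "z1 v = z2 v" using H v True x0 by (auto simp: Hinv_def)
    have nb: "(length (mul1 v l) \<le> \<rho> \<and> z1 (mul1 v l) = z2 (mul1 v l) \<and> z1 (mul1 v l) div 2 = 0 \<and> z2 (mul1 v l) div 2 = 0) \<or>
              (z1 (mul1 v l) div 2 = 2 + lc (inv_l l) \<and> z2 (mul1 v l) div 2 = 2 + lc (inv_l l))"
      if l: "l \<in> E d" for l
    proof -
      have u: "mul1 v l \<in> fg_carrier d" using v l by (rule mul1_carrier_E)
      from nbr_shape[OF v True l] show ?thesis
        using H u by (auto simp: Hinv_def)
    qed
    have s1: "nsh d (z1 v) (\<lambda>l. z1 (mul1 v l)) = 0"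
    proof (rule nsh_good)
      show "z1 v div 2 = 0" by (rule c1)
      fix l assume "l \<in> E d" then show "z1 (mul1 v l) div 2 = 0 \<or> z1 (mul1 v l) div 2 = 2 + lc (inv_l l)"
        using nb[of l] by blast
    qed
    have s2: "nsh d (z2 v) (\<lambda>l. z2 (mul1 v l)) = 0"
    proof (rule nsh_good)
      show "z2 v div 2 = 0" by (rule c1)
      fix l assume "l \<in> E d" then show "z2 (mul1 v l) div 2 = 0 \<or> z2 (mul1 v l) div 2 = 2 + lc (inv_l l)"
        using nb[of l] by blast
    qed
    have pw: "(\<not> seal (z1 v) (z1 (mul1 v l)) l \<and> odd (z1 (mul1 v l))) = (\<not> seal (z2 v) (z2 (mul1 v l)) l \<and> odd (z2 (mul1 v l)))"
      if l: "l \<in> E d" for l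
      using nb[OF l]
    proof
      assume "length (mul1 v l) \<le> \<rho> \<and> z1 (mul1 v l) = z2 (mul1 v l) \<and> z1 (mul1 v l) div 2 = 0 \<and> z2 (mul1 v l) div 2 = 0"
      then show ?thesis using ceq by simp
    next
      assume h: "z1 (mul1 v l) div 2 = 2 + lc (inv_l l) \<and> z2 (mul1 v l) div 2 = 2 + lc (inv_l l)"
      then have "seal (z1 v) (z1 (mul1 v l)) l" "seal (z2 v) (z2 (mul1 v l)) l" using c1 by (auto simp: seal_def)
      then show ?thesis by simp
    qed
    have "{l \<in> E d. \<not> seal (z1 v) (z1 (mul1 v l)) l \<and> odd (z1 (mul1 v l))} =
          {l \<in> E d. \<not> seal (z2 v) (z2 (mul1 v l)) l \<and> odd (z2 (mul1 v l))}"
      using pw by blast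
    then have "nbit d (z1 v) (\<lambda>l. z1 (mul1 v l)) = nbit d (z2 v) (\<lambda>l. z2 (mul1 v l))"
      by (simp add: nbit_def)
    then have "Phi d z1 v = Phi d z2 v" using s1 s2 v by (simp add: Phi_eval rule_def)
    then show ?thesis using s1 s2 x0 v by (simp add: Phi_eval)
  qed
  then show ?thesis by (simp add: Hinv_def)
qed

lemma Hinv_pow: "Hinv d \<rho> z1 z2 \<Longrightarrow> Hinv d \<rho> ((Phi d ^^ t) z1) ((Phi d ^^ t) z2)"
  by (induction t) (auto intro: Hinv_step)

lemma not_sensitive: "\<not> sensitive d (Ad d) (Phi d)"
proof -
  have "\<exists>x \<in> configs d (Ad d). \<exists>\<delta>>0. \<forall>t. \<forall>y \<in> cball_c d (Ad d) x \<delta>.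
          (Phi d ^^ t) y \<in> cball_c d (Ad d) ((Phi d ^^ t) x) \<epsilon>" if e: "\<epsilon> > 0" for \<epsilon> :: real
  proof -
    obtain \<rho> where r: "(1/2::real) ^ \<rho> < \<epsilon>" using real_arch_pow_inv[OF e, of "1/2"] by auto
    have "(1/2::real) ^ Suc \<rho> \<le> (1/2) ^ \<rho>" by (rule half_pow_mono) simp
    then have r2: "(1/2::real) ^ Suc \<rho> \<le> \<epsilon>" using r by linarith
    have "\<forall>t. \<forall>y \<in> cball_c d (Ad d) (xr \<rho>) ((1/2) ^ Suc (Suc \<rho>)).
          (Phi d ^^ t) y \<in> cball_c d (Ad d) ((Phi d ^^ t) (xr \<rho>)) \<epsilon>"
    proof (intro allI ballI)
      fix t y assume y: "y \<in> cball_c d (Ad d) (xr \<rho>) ((1/2) ^ Suc (Suc \<rho>))"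
      then have yc: "y \<in> configs d (Ad d)" and yd: "cdist d (xr \<rho>) y \<le> (1/2) ^ Suc (Suc \<rho>)"
        by (auto simp: cball_c_def)
      have agree: "v \<in> fg_carrier d \<Longrightarrow> length v \<le> Suc \<rho> \<Longrightarrow> y v = xr \<rho> v" for v
        using cdist_agree[OF yd] by metis
      have "Hinv d \<rho> y (xr \<rho>)" using agree by (auto simp: Hinv_def)
      then have H: "Hinv d \<rho> ((Phi d ^^ t) y) ((Phi d ^^ t) (xr \<rho>))" by (rule Hinv_pow)
      have "cdist d ((Phi d ^^ t) (xr \<rho>)) ((Phi d ^^ t) y) \<le> (1/2) ^ Suc \<rho>"
        by (rule cdist_le) (use H in \<open>auto simp: Hinv_def\<close>)
      then show "(Phi d ^^ t) y \<in> cball_c d (Ad d) ((Phi d ^^ t) (xr \<rho>)) \<epsilon>"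
        using r2 Phi_pow_configs[OF yc] by (auto simp: cball_c_def)
    qed
    moreover have pos: "(0::real) < (1/2) ^ Suc (Suc \<rho>)" by simp
    ultimately show ?thesis using xr_configs by blast
  qed
  then show ?thesis by (auto simp: sensitive_def)
qed



lemma O_perm: "v \<in> fg_carrier d \<Longrightarrow> z v div 2 \<noteq> 0 \<Longrightarrow> Phi d z v div 2 = z v div 2"
  by (simp add: Phi_eval nsh_O)

lemma O_perm_pow:
  assumes "v \<in> fg_carrier d" "(Phi d ^^ s) z v div 2 \<noteq> 0" "s \<le> t"
  shows "(Phi d ^^ t) z v div 2 = (Phi d ^^ s) z v div 2"
  using assms(3)
proof (induction t)
  case 0 then show ?case by simp
next
  case (Suc t)
  show ?case
  proof (cases "s = Suc t")
    case True then show ?thesis by simp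
  next
    case False
    then have st: "s \<le> t" using Suc.prems by simp
    then have IH: "(Phi d ^^ t) z v div 2 = (Phi d ^^ s) z v div 2" by (rule Suc.IH)
    then have "(Phi d ^^ t) z v div 2 \<noteq> 0" using assms(2) by simp
    then have "Phi d ((Phi d ^^ t) z) v div 2 = (Phi d ^^ t) z v div 2" by (rule O_perm[OF assms(1)])
    then show ?thesis using IH by simp
  qed
qed

lemma I_to_O: "v \<in> fg_carrier d \<Longrightarrow> z v div 2 = 0 \<Longrightarrow> Phi d z v div 2 \<noteq> 0 \<Longrightarrow> Phi d z v div 2 = 1"
  by (simp add: Phi_eval nsh_I_O)

lemma bad_to_O:
  assumes "v \<in> fg_carrier d" "z v div 2 = 0" "l \<in> E d" "z (mul1 v l) div 2 \<noteq> 0"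
    "z (mul1 v l) div 2 \<noteq> 2 + lc (inv_l l)"
  shows "Phi d z v div 2 \<noteq> 0"
proof -
  have "nsh d (z v) (\<lambda>l. z (mul1 v l)) = 1" using assms(2-5) by (rule nsh_bad)
  then show ?thesis using assms(1) by (simp add: Phi_eval)
qed

lemma shape_sync:
  assumes "\<And>v. v \<in> fg_carrier d \<Longrightarrow> z1 v div 2 = z2 v div 2" "v \<in> fg_carrier d"
  shows "Phi d z1 v div 2 = Phi d z2 v div 2"
proof -
  have "nsh d (z1 v) (\<lambda>l. z1 (mul1 v l)) = nsh d (z2 v) (\<lambda>l. z2 (mul1 v l))"
  proof (rule nsh_dep)
    show "z1 v div 2 = z2 v div 2" by (rule assms(1)[OF assms(2)])
  next
    fix l assume "l \<in> E d"
    then show "z1 (mul1 v l) div 2 = z2 (mul1 v l) div 2" by (rule assms(1)[OF mul1_carrier_E[OF assms(2)]])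
  qed
  then show ?thesis using assms(2) by (simp add: Phi_eval)
qed

lemma shape_sync_pow:
  assumes "\<And>v. v \<in> fg_carrier d \<Longrightarrow> z1 v div 2 = z2 v div 2" "v \<in> fg_carrier d"
  shows "(Phi d ^^ t) z1 v div 2 = (Phi d ^^ t) z2 v div 2"
  using assms(2)
proof (induction t arbitrary: v)
  case 0 then show ?case using assms(1) by simp
next
  case (Suc t)
  have "Phi d ((Phi d ^^ t) z1) v div 2 = Phi d ((Phi d ^^ t) z2) v div 2"
    by (rule shape_sync[OF Suc.IH Suc.prems])
  then show ?case by simp
qed

lemma bit_rec:
  assumes "\<And>v. v \<in> fg_carrier d \<Longrightarrow> z1 v div 2 = z2 v div 2" "v \<in> fg_carrier d"
  shows "(Phi d z1 v mod 2 \<noteq> Phi d z2 v mod 2) \<longleftrightarrow>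
     odd (card {l \<in> E d. \<not> seal (z1 v) (z1 (mul1 v l)) l \<and> z1 (mul1 v l) mod 2 \<noteq> z2 (mul1 v l) mod 2})"
  unfolding Phi_eval[OF assms(2)]
proof (rule rule_bit_diff)
  show "z1 v div 2 = z2 v div 2" by (rule assms(1)[OF assms(2)])
next
  fix l assume "l \<in> E d"
  then show "z1 (mul1 v l) div 2 = z2 (mul1 v l) div 2" by (rule assms(1)[OF mul1_carrier_E[OF assms(2)]])
qed

definition Mset :: "nat \<Rightarrow> (fgword \<Rightarrow> nat) \<Rightarrow> fgword set" where
  "Mset d z = {u \<in> fg_carrier d. \<exists>t. (Phi d ^^ t) z u div 2 \<noteq> 0}"

lemma claim1:
  assumes u: "u \<in> Mset d z" and l: "l \<in> E d"
    and c: "\<forall>t. (Phi d ^^ t) z (mul1 u l) div 2 = 0"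
  shows "z u div 2 = 2 + lc l"
proof -
  have uc: "u \<in> fg_carrier d" using u by (simp add: Mset_def)
  have cc: "mul1 u l \<in> fg_carrier d" using uc l by (rule mul1_carrier_E)
  have bk: "mul1 (mul1 u l) (inv_l l) = u" using uc by (simp add: mul1_inv carrier_reduced)
  let ?P = "\<lambda>t. (Phi d ^^ t) z u div 2 \<noteq> 0"
  obtain t0 where "?P t0" using u by (auto simp: Mset_def)
  then have Pk: "?P (LEAST t. ?P t)" by (rule LeastI[of ?P])
  define k where "k = (LEAST t. ?P t)"
  have Pk': "(Phi d ^^ k) z u div 2 \<noteq> 0" using Pk by (simp add: k_def)
  have eq: "(Phi d ^^ k) z u div 2 = 2 + lc l"
  proof (rule ccontr)
    assume ne: "(Phi d ^^ k) z u div 2 \<noteq> 2 + lc l"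
    have "Phi d ((Phi d ^^ k) z) (mul1 u l) div 2 \<noteq> 0"
      by (rule bad_to_O[of "mul1 u l" d "(Phi d ^^ k) z" "inv_l l", OF cc c[rule_format] inv_E[THEN iffD2, OF l]]) (use bk Pk' ne in simp_all)
    then show False using c[rule_format, of "Suc k"] by simp
  qed
  show ?thesis
  proof (cases k)
    case 0 then show ?thesis using eq by simp
  next
    case (Suc k')
    have "\<not> ?P k'" using Suc by (intro not_less_Least) (simp add: k_def)
    then have z0: "(Phi d ^^ k') z u div 2 = 0" by simp
    have "Phi d ((Phi d ^^ k') z) u div 2 = 1"
      by (rule I_to_O[of u d "(Phi d ^^ k') z", OF uc z0]) (use Pk' Suc in simp)
    then show ?thesis using eq Suc by simp
  qed
qed

lemma nonM_iff: "u \<in> fg_carrier d \<Longrightarrow> u \<notin> Mset d z \<longleftrightarrow> (\<forall>t. (Phi d ^^ t) z u div 2 = 0)"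
  by (auto simp: Mset_def)

lemma next_exists:
  assumes u: "u \<in> Mset d z" and d2: "2 \<le> d"
  shows "\<exists>l. l \<in> E d \<and> l \<noteq> inv_l p \<and> mul1 u l \<in> Mset d z"
proof (rule ccontr)
  assume nt: "\<not> ?thesis"
  have uc: "u \<in> fg_carrier d" using u by (simp add: Mset_def)
  have h: "z u div 2 = 2 + lc l" if l: "l \<in> E d" and ne: "l \<noteq> inv_l p" for l
  proof -
    have "mul1 u l \<notin> Mset d z" using nt l ne by blast
    then have "\<forall>t. (Phi d ^^ t) z (mul1 u l) div 2 = 0"
      using nonM_iff[OF mul1_carrier_E[OF uc l]] by simp
    then show ?thesis by (rule claim1[OF u l])
  qed
  have E4: "(0, True) \<in> E d" "(0, False) \<in> E d" "(1, True) \<in> E d" "(1, False) \<in> E d"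
    using d2 by (auto simp: E_def)
  show False
  proof (cases "inv_l p = (0, True) \<or> inv_l p = (0, False)")
    case True
    have "z u div 2 = 2 + lc (1, True)" by (rule h[OF E4(3)]) (use True in auto)
    moreover have "z u div 2 = 2 + lc (1, False)" by (rule h[OF E4(4)]) (use True in auto)
    ultimately show False by (simp add: lc_def)
  next
    case False
    have "z u div 2 = 2 + lc (0, True)" by (rule h[OF E4(1)]) (use False in auto)
    moreover have "z u div 2 = 2 + lc (0, False)" by (rule h[OF E4(2)]) (use False in auto)
    ultimately show False by (simp add: lc_def)
  qed
qed



definition nxt :: "nat \<Rightarrow> (fgword \<Rightarrow> nat) \<Rightarrow> fgword \<Rightarrow> nat \<times> bool \<Rightarrow> nat \<times> bool" where
  "nxt d z u p = (SOME l. l \<in> E d \<and> l \<noteq> inv_l p \<and> mul1 u l \<in> Mset d z)"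

lemma nxt_prop:
  assumes "u \<in> Mset d z" "2 \<le> d"
  shows "nxt d z u p \<in> E d \<and> nxt d z u p \<noteq> inv_l p \<and> mul1 u (nxt d z u p) \<in> Mset d z"
  unfolding nxt_def by (rule someI_ex) (rule next_exists[OF assms])

primrec pth :: "nat \<Rightarrow> (fgword \<Rightarrow> nat) \<Rightarrow> fgword \<Rightarrow> nat \<Rightarrow> fgword \<times> (nat \<times> bool)" where
  "pth d z g 0 = (g, (d, True))"
| "pth d z g (Suc i) = (mul1 (fst (pth d z g i)) (nxt d z (fst (pth d z g i)) (snd (pth d z g i))),
                        nxt d z (fst (pth d z g i)) (snd (pth d z g i)))"

definition V :: "nat \<Rightarrow> (fgword \<Rightarrow> nat) \<Rightarrow> fgword \<Rightarrow> nat \<Rightarrow> fgword" where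
  "V d z g i = fst (pth d z g i)"

definition Sx :: "nat \<Rightarrow> (fgword \<Rightarrow> nat) \<Rightarrow> fgword \<Rightarrow> nat \<Rightarrow> nat \<times> bool" where
  "Sx d z g i = snd (pth d z g (Suc i))"

lemma V_0: "V d z g 0 = g" by (simp add: V_def)

lemma V_Suc: "V d z g (Suc i) = mul1 (V d z g i) (Sx d z g i)"
  by (simp add: V_def Sx_def)

lemma Sx_eq: "Sx d z g i = nxt d z (V d z g i) (snd (pth d z g i))"
  by (simp add: V_def Sx_def)

lemma snd_pth_Suc: "snd (pth d z g (Suc i)) = Sx d z g i"
  by (simp add: Sx_def)

lemma V_M:
  assumes "g \<in> Mset d z" "2 \<le> d"
  shows "V d z g i \<in> Mset d z"
proof (induction i)
  case 0 then show ?case using assms by (simp add: V_0)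
next
  case (Suc i)
  then show ?case using nxt_prop[OF Suc assms(2)] by (simp add: V_Suc Sx_eq)
qed

lemma V_carrier: "g \<in> Mset d z \<Longrightarrow> 2 \<le> d \<Longrightarrow> V d z g i \<in> fg_carrier d"
  using V_M[of g d z i] by (simp add: Mset_def)

lemma Sx_E: "g \<in> Mset d z \<Longrightarrow> 2 \<le> d \<Longrightarrow> Sx d z g i \<in> E d"
  using nxt_prop[OF V_M] by (simp add: Sx_eq)

lemma Sx_nb:
  assumes gM: "g \<in> Mset d z" and d2: "2 \<le> d"
  shows "Sx d z g (Suc i) \<noteq> inv_l (Sx d z g i)"
proof -
  have e: "Sx d z g (Suc i) = nxt d z (V d z g (Suc i)) (Sx d z g i)"
    by (simp only: Sx_eq[of d z g "Suc i"] snd_pth_Suc)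
  have "nxt d z (V d z g (Suc i)) (Sx d z g i) \<noteq> inv_l (Sx d z g i)"
    using nxt_prop[OF V_M[OF gM d2] d2] by blast
  then show ?thesis using e by simp
qed

lemma from_g:
  assumes gM: "g \<in> Mset d z" and d2: "2 \<le> d"
  shows "reduce (winv g @ V d z g i) = map (Sx d z g) [0..<i]"
proof (induction i)
  case 0
  show ?case by (simp add: V_0 reduce_winv)
next
  case (Suc i)
  have rV: "reduced (V d z g i)" by (rule carrier_reduced[OF V_carrier[OF gM d2]])
  have "reduce (winv g @ V d z g (Suc i)) = mul1 (map (Sx d z g) [0..<i]) (Sx d z g i)"
    using Suc rV by (simp add: V_Suc reduce_mul1)
  also have "\<dots> = map (Sx d z g) [0..<i] @ [Sx d z g i]"
  proof (rule mul1_noncancel)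
    show "\<not> (map (Sx d z g) [0..<i] \<noteq> [] \<and> cancels (last (map (Sx d z g) [0..<i])) (Sx d z g i))"
    proof (cases i)
      case 0 then show ?thesis by simp
    next
      case (Suc i')
      have "Sx d z g (Suc i') \<noteq> inv_l (Sx d z g i')" by (rule Sx_nb[OF gM d2])
      then have "\<not> cancels (Sx d z g i') (Sx d z g (Suc i'))"
        by (auto simp: cancels_iff)
      then show ?thesis using Suc by simp
    qed
  qed
  finally show ?case by simp
qed

lemma len_V:
  assumes "g \<in> Mset d z" "2 \<le> d"
  shows "i \<le> length g + length (V d z g i)"
proof -
  have "i = length (reduce (winv g @ V d z g i))" using from_g[OF assms] by simp
  also have "\<dots> \<le> length (winv g @ V d z g i)" by (rule length_reduce)
  finally show ?thesis by (simp add: winv_def)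
qed

lemma to_f:
  assumes gM: "g \<in> Mset d z" and d2: "2 \<le> d"
  shows "i + k = L \<Longrightarrow> reduce (winv (V d z g L) @ V d z g i) = rev (map (\<lambda>j. inv_l (Sx d z g j)) [i..<L])"
proof (induction k arbitrary: i)
  case 0
  then show ?case by (simp add: reduce_winv)
next
  case (Suc k)
  let ?f = "V d z g L" and ?h = "\<lambda>j. inv_l (Sx d z g j)"
  have IH: "reduce (winv ?f @ V d z g (Suc i)) = rev (map ?h [Suc i..<L])" using Suc by simp
  have rVi: "reduced (V d z g i)" by (rule carrier_reduced[OF V_carrier[OF gM d2]])
  have rVs: "reduced (V d z g (Suc i))" by (rule carrier_reduced[OF V_carrier[OF gM d2]])
  have Vi: "V d z g i = mul1 (V d z g (Suc i)) (inv_l (Sx d z g i))"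
    using rVi by (simp add: V_Suc mul1_inv)
  have "reduce (winv ?f @ V d z g i) = mul1 (rev (map ?h [Suc i..<L])) (inv_l (Sx d z g i))"
    using Vi IH rVs by (simp add: reduce_mul1)
  also have "\<dots> = rev (map ?h [Suc i..<L]) @ [inv_l (Sx d z g i)]"
  proof (rule mul1_noncancel)
    show "\<not> (rev (map ?h [Suc i..<L]) \<noteq> [] \<and> cancels (last (rev (map ?h [Suc i..<L]))) (inv_l (Sx d z g i)))"
    proof (cases "Suc i < L")
      case True
      have "last (rev (map ?h [Suc i..<L])) = ?h (Suc i)"
        using True by (simp add: last_rev upt_conv_Cons)
      moreover have "Sx d z g (Suc i) \<noteq> inv_l (Sx d z g i)" by (rule Sx_nb[OF gM d2])
      ultimately show ?thesis by (auto simp: cancels_iff) (metis inv_inv)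
    next
      case False then show ?thesis by simp
    qed
  qed
  also have "\<dots> = rev (map ?h [i..<L])"
    using Suc.prems by (simp add: upt_conv_Cons)
  finally show ?case .
qed

definition pot :: "fgword \<Rightarrow> fgword \<Rightarrow> nat" where
  "pot f v = length (reduce (winv f @ v))"

lemma pot_nbr: "reduced v \<Longrightarrow> pot f (mul1 v l) = length (mul1 (reduce (winv f @ v)) l)"
  by (simp add: pot_def reduce_mul1)

lemma pot_step: "reduced v \<Longrightarrow> pot f v \<le> Suc (pot f (mul1 v l))"
  by (simp add: pot_nbr) (simp add: pot_def length_mul1)

lemma supp:
  assumes SS: "\<And>t v. v \<in> fg_carrier d \<Longrightarrow> (Phi d ^^ t) y1 v div 2 = (Phi d ^^ t) y2 v div 2"
    and B0: "\<And>v. v \<in> fg_carrier d \<Longrightarrow> v \<noteq> f \<Longrightarrow> y1 v mod 2 = y2 v mod 2"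
  shows "v \<in> fg_carrier d \<Longrightarrow> (Phi d ^^ t) y1 v mod 2 \<noteq> (Phi d ^^ t) y2 v mod 2 \<Longrightarrow> pot f v \<le> t"
proof (induction t arbitrary: v)
  case 0
  then have "v = f" using B0 by auto
  then show ?case by (simp add: pot_def reduce_winv)
next
  case (Suc t)
  let ?z1 = "(Phi d ^^ t) y1" and ?z2 = "(Phi d ^^ t) y2"
  have "Phi d ?z1 v mod 2 \<noteq> Phi d ?z2 v mod 2" using Suc.prems by simp
  then have "odd (card {l \<in> E d. \<not> seal (?z1 v) (?z1 (mul1 v l)) l \<and> ?z1 (mul1 v l) mod 2 \<noteq> ?z2 (mul1 v l) mod 2})"
    using bit_rec[of d ?z1 ?z2 v] SS Suc.prems(1) by blast
  then have "{l \<in> E d. \<not> seal (?z1 v) (?z1 (mul1 v l)) l \<and> ?z1 (mul1 v l) mod 2 \<noteq> ?z2 (mul1 v l) mod 2} \<noteq> {}"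
    by (metis card.empty odd_card_imp_not_empty)
  then obtain l where l: "l \<in> E d" and dl: "?z1 (mul1 v l) mod 2 \<noteq> ?z2 (mul1 v l) mod 2" by auto
  have "pot f (mul1 v l) \<le> t" by (rule Suc.IH[OF mul1_carrier_E[OF Suc.prems(1) l] dl])
  moreover have "pot f v \<le> Suc (pot f (mul1 v l))"
    by (rule pot_step) (rule carrier_reduced[OF Suc.prems(1)])
  ultimately show ?case by simp
qed



lemma prop_path:
  assumes gM: "g \<in> Mset d y1" and d2: "2 \<le> d"
    and SS: "\<And>t v. v \<in> fg_carrier d \<Longrightarrow> (Phi d ^^ t) y1 v div 2 = (Phi d ^^ t) y2 v div 2"
    and B0: "\<And>v. v \<in> fg_carrier d \<Longrightarrow> v \<noteq> V d y1 g L \<Longrightarrow> y1 v mod 2 = y2 v mod 2"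
    and D0: "y1 (V d y1 g L) mod 2 \<noteq> y2 (V d y1 g L) mod 2"
    and OO: "\<And>i. i < L \<Longrightarrow> (Phi d ^^ (L - Suc i)) y1 (V d y1 g i) div 2 \<noteq> 0 \<and>
                             (Phi d ^^ (L - Suc i)) y1 (V d y1 g (Suc i)) div 2 \<noteq> 0"
  shows "j \<le> L \<Longrightarrow> (Phi d ^^ j) y1 (V d y1 g (L - j)) mod 2 \<noteq> (Phi d ^^ j) y2 (V d y1 g (L - j)) mod 2"
proof (induction j)
  case 0 then show ?case using D0 by simp
next
  case (Suc j)
  define i where "i = L - Suc j"
  have Li: "L - j = Suc i" "i < L" "L - Suc i = j" using Suc.prems by (auto simp: i_def)
  let ?f = "V d y1 g L" and ?z1 = "(Phi d ^^ j) y1" and ?z2 = "(Phi d ^^ j) y2" and ?v = "V d y1 g i"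
  let ?h = "\<lambda>j. inv_l (Sx d y1 g j)"
  have vc: "?v \<in> fg_carrier d" by (rule V_carrier[OF gM d2])
  have IH: "?z1 (V d y1 g (Suc i)) mod 2 \<noteq> ?z2 (V d y1 g (Suc i)) mod 2"
    using Suc.IH Suc.prems Li(1) by simp
  have W: "reduce (winv ?f @ ?v) = rev (map ?h [i..<L])"
    by (rule to_f[OF gM d2, of i "L - i"]) (use Li in simp)
  have set_eq: "{l \<in> E d. \<not> seal (?z1 ?v) (?z1 (mul1 ?v l)) l \<and> ?z1 (mul1 ?v l) mod 2 \<noteq> ?z2 (mul1 ?v l) mod 2}
      = {Sx d y1 g i}"
  proof
    show "{l \<in> E d. \<not> seal (?z1 ?v) (?z1 (mul1 ?v l)) l \<and> ?z1 (mul1 ?v l) mod 2 \<noteq> ?z2 (mul1 ?v l) mod 2} \<subseteq> {Sx d y1 g i}"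
    proof
      fix l assume "l \<in> {l \<in> E d. \<not> seal (?z1 ?v) (?z1 (mul1 ?v l)) l \<and> ?z1 (mul1 ?v l) mod 2 \<noteq> ?z2 (mul1 ?v l) mod 2}"
      then have l: "l \<in> E d" and dl: "?z1 (mul1 ?v l) mod 2 \<noteq> ?z2 (mul1 ?v l) mod 2" by auto
      have "pot ?f (mul1 ?v l) \<le> j"
        by (rule supp[OF SS B0 mul1_carrier_E[OF vc l] dl])
      moreover have "pot ?f (mul1 ?v l) = length (mul1 (rev (map ?h [i..<L])) l)"
        using pot_nbr[OF carrier_reduced[OF vc]] W by simp
      ultimately have le: "length (mul1 (rev (map ?h [i..<L])) l) \<le> j" by simp
      have len: "length (rev (map ?h [i..<L])) = Suc j" using Li by simp
      have "rev (map ?h [i..<L]) \<noteq> [] \<and> cancels (last (rev (map ?h [i..<L]))) l"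
      proof (rule ccontr)
        assume "\<not> ?thesis"
        then have "length (mul1 (rev (map ?h [i..<L])) l) = Suc (Suc j)"
          using len by (simp only: length_mul1 if_False)
        then show False using le by simp
      qed
      moreover have "last (rev (map ?h [i..<L])) = ?h i"
        using Li(2) by (simp add: last_rev upt_conv_Cons)
      ultimately have "?h i = inv_l l" by (simp add: cancels_iff)
      then have "l = Sx d y1 g i" by (metis inv_inv)
      then show "l \<in> {Sx d y1 g i}" by simp
    qed
  next
    have sE: "Sx d y1 g i \<in> E d" by (rule Sx_E[OF gM d2])
    have m: "mul1 ?v (Sx d y1 g i) = V d y1 g (Suc i)" by (simp add: V_Suc)
    have o1: "?z1 ?v div 2 \<noteq> 0" and o2: "?z1 (V d y1 g (Suc i)) div 2 \<noteq> 0"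
      using OO[OF Li(2)] Li(3) by auto
    have ns: "\<not> seal (?z1 ?v) (?z1 (mul1 ?v (Sx d y1 g i))) (Sx d y1 g i)"
      using o1 o2 m by (simp add: seal_def)
    show "{Sx d y1 g i} \<subseteq> {l \<in> E d. \<not> seal (?z1 ?v) (?z1 (mul1 ?v l)) l \<and> ?z1 (mul1 ?v l) mod 2 \<noteq> ?z2 (mul1 ?v l) mod 2}"
      using sE ns IH m by simp
  qed
  have "Phi d ?z1 ?v mod 2 \<noteq> Phi d ?z2 ?v mod 2"
    using bit_rec[of d ?z1 ?z2 ?v] SS vc set_eq by simp
  then show ?case using Li by (simp add: i_def)
qed

lemma reduced_rep: "reduced (replicate k a)"
proof (induction k)
  case 0 then show ?case by simp
next
  case (Suc k) then show ?case by (cases k) (auto simp: cancels_def)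
qed

lemma rep_carrier: "fst a < d \<Longrightarrow> replicate k a \<in> fg_carrier d"
  by (auto simp: fg_carrier_def reduced_rep)

lemma mul1_rep: "mul1 (replicate (Suc k) a) (inv_l a) = replicate k a"
proof -
  have "mul1 (replicate k a) a = replicate k a @ [a]"
    by (rule mul1_noncancel) (auto simp: cancels_def)
  then have "replicate (Suc k) a = mul1 (replicate k a) a" by (simp add: replicate_append_same)
  then show ?thesis using reduced_rep by (simp add: mul1_inv)
qed



lemma no_equicont:
  assumes d2: "2 \<le> d" and x: "x \<in> configs d (Ad d)"
  shows "\<not> equicont_point d (Ad d) (Phi d) x"
proof -
  obtain g where gc: "g \<in> fg_carrier d"
    and gcase: "x g div 2 \<noteq> 0 \<or> (g = [] \<and> (\<forall>v \<in> fg_carrier d. x v div 2 = 0))"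
  proof (cases "\<exists>v \<in> fg_carrier d. x v div 2 \<noteq> 0")
    case True then show ?thesis using that by blast
  next
    case False then show ?thesis using that[of "[]"] by (auto simp: fg_carrier_def)
  qed
  define \<epsilon> :: real where "\<epsilon> = (1/2) ^ Suc (length g)"
  have epos: "\<epsilon> > 0" by (simp add: \<epsilon>_def)
  have main: "\<exists>t. \<exists>y \<in> cball_c d (Ad d) x \<delta>. (Phi d ^^ t) y \<notin> cball_c d (Ad d) ((Phi d ^^ t) x) \<epsilon>"
    if dp: "\<delta> > 0" for \<delta> :: real
  proof -
    obtain R0 where R0: "(1/2::real) ^ R0 < \<delta>" using real_arch_pow_inv[OF dp, of "1/2"] by auto
    define R where "R = R0 + length g"
    have "(1/2::real) ^ Suc R \<le> (1/2) ^ R0" by (rule half_pow_mono) (simp add: R_def)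
    then have Rd: "(1/2::real) ^ Suc R \<le> \<delta>" using R0 by linarith
    define y1 where "y1 = (\<lambda>v::fgword. if length v \<le> R then x v else 2)"
    have gM: "g \<in> Mset d y1"
    proof (cases "x g div 2 \<noteq> 0")
      case True
      have "y1 g = x g" by (simp add: y1_def R_def)
      then have "(Phi d ^^ 0) y1 g div 2 \<noteq> 0" using True by simp
      then show ?thesis using gc unfolding Mset_def by blast
    next
      case False
      then have g0: "g = []" and x0: "\<forall>v \<in> fg_carrier d. x v div 2 = 0" using gcase by auto
      let ?a = "(0::nat, True)"
      have aE: "?a \<in> E d" "inv_l ?a \<in> E d" using d2 by (auto simp: E_def)
      show ?thesis
      proof (rule ccontr)
        assume nM: "g \<notin> Mset d y1"
        have "replicate k ?a \<notin> Mset d y1" for k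
        proof (induction k)
          case 0 then show ?case using nM g0 by simp
        next
          case (Suc k)
          show ?case
          proof
            assume M: "replicate (Suc k) ?a \<in> Mset d y1"
            have kc: "replicate k ?a \<in> fg_carrier d" using d2 by (intro rep_carrier) simp
            have "\<forall>t. (Phi d ^^ t) y1 (mul1 (replicate (Suc k) ?a) (inv_l ?a)) div 2 = 0"
              unfolding mul1_rep using Suc nonM_iff[OF kc] by simp
            then have "y1 (replicate (Suc k) ?a) div 2 = 2 + lc (inv_l ?a)"
              by (rule claim1[OF M aE(2)])
            moreover have "replicate (Suc k) ?a \<in> fg_carrier d" using d2 by (intro rep_carrier) simp
            ultimately show False using x0 by (simp add: y1_def lc_def inv_l_def split: if_splits)
          qed
        qed
        then have nR: "replicate (Suc R) ?a \<notin> Mset d y1" .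
        have "(Phi d ^^ 0) y1 (replicate (Suc R) ?a) div 2 \<noteq> 0" by (simp add: y1_def)
        moreover have "replicate (Suc R) ?a \<in> fg_carrier d" using d2 by (intro rep_carrier) simp
        ultimately have "replicate (Suc R) ?a \<in> Mset d y1" unfolding Mset_def by blast
        then show False using nR by simp
      qed
    qed
    define B where "B = R + length g + 1"
    define Kf where "Kf = (\<lambda>i. LEAST t. (Phi d ^^ t) y1 (V d y1 g i) div 2 \<noteq> 0)"
    define K where "K = Max (Kf ` {..B})"
    define L where "L = B + K + 2"
    define f where "f = V d y1 g L"
    have lenV: "n \<le> length g + length (V d y1 g n)" for n by (rule len_V[OF gM d2])
    have lenf: "R < length f" using lenV[of L] by (simp add: f_def L_def B_def)
    define y2 where "y2 = y1(f := 3)"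
    have y1f: "y1 f = 2" using lenf by (simp add: y1_def)
    have SS0: "y1 v div 2 = y2 v div 2" if "v \<in> fg_carrier d" for v using y1f by (simp add: y2_def)
    have SS: "(Phi d ^^ t) y1 v div 2 = (Phi d ^^ t) y2 v div 2" if "v \<in> fg_carrier d" for t v
      by (rule shape_sync_pow[OF SS0 that])
    have B0: "y1 v mod 2 = y2 v mod 2" if "v \<in> fg_carrier d" "v \<noteq> V d y1 g L" for v
      using that by (simp add: y2_def f_def)
    have D0: "y1 (V d y1 g L) mod 2 \<noteq> y2 (V d y1 g L) mod 2" using y1f by (simp add: y2_def f_def)
    have OOv: "(Phi d ^^ t) y1 (V d y1 g n) div 2 \<noteq> 0" if n: "n \<le> B" and t: "K \<le> t" for n t
    proof -
      have "Kf n \<in> Kf ` {..B}" using n by simp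
      then have kn: "Kf n \<le> K" unfolding K_def by (intro Max_ge) auto
      have "V d y1 g n \<in> Mset d y1" by (rule V_M[OF gM d2])
      then obtain t0 where "(Phi d ^^ t0) y1 (V d y1 g n) div 2 \<noteq> 0" by (auto simp: Mset_def)
      then have P: "(Phi d ^^ Kf n) y1 (V d y1 g n) div 2 \<noteq> 0"
        unfolding Kf_def by (rule LeastI[of "\<lambda>t. (Phi d ^^ t) y1 (V d y1 g n) div 2 \<noteq> 0"])
      have "(Phi d ^^ t) y1 (V d y1 g n) div 2 = (Phi d ^^ Kf n) y1 (V d y1 g n) div 2"
        by (rule O_perm_pow[OF V_carrier[OF gM d2] P]) (use kn t in simp)
      then show ?thesis using P by simp
    qed
    have OOo: "(Phi d ^^ t) y1 (V d y1 g n) div 2 \<noteq> 0" if n: "B < n" for n t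
    proof -
      have "R < length (V d y1 g n)" using lenV[of n] n by (simp add: B_def)
      then have P: "(Phi d ^^ 0) y1 (V d y1 g n) div 2 \<noteq> 0" by (simp add: y1_def)
      have "(Phi d ^^ t) y1 (V d y1 g n) div 2 = (Phi d ^^ 0) y1 (V d y1 g n) div 2"
        by (rule O_perm_pow[OF V_carrier[OF gM d2] P]) simp
      then show ?thesis using P by simp
    qed
    have OO: "(Phi d ^^ (L - Suc i)) y1 (V d y1 g i) div 2 \<noteq> 0 \<and>
              (Phi d ^^ (L - Suc i)) y1 (V d y1 g (Suc i)) div 2 \<noteq> 0" if i: "i < L" for i
    proof
      show "(Phi d ^^ (L - Suc i)) y1 (V d y1 g i) div 2 \<noteq> 0"
      proof (cases "i \<le> B")
        case True then show ?thesis by (intro OOv) (auto simp: L_def)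
      next
        case False then show ?thesis by (intro OOo) simp
      qed
    next
      show "(Phi d ^^ (L - Suc i)) y1 (V d y1 g (Suc i)) div 2 \<noteq> 0"
      proof (cases "Suc i \<le> B")
        case True then show ?thesis by (intro OOv) (auto simp: L_def)
      next
        case False then show ?thesis by (intro OOo) simp
      qed
    qed
    have "(Phi d ^^ L) y1 (V d y1 g (L - L)) mod 2 \<noteq> (Phi d ^^ L) y2 (V d y1 g (L - L)) mod 2"
      by (rule prop_path[OF gM d2 SS B0 D0 OO]) simp_all
    then have dif: "(Phi d ^^ L) y1 g \<noteq> (Phi d ^^ L) y2 g" by (auto simp: V_0)
    have y1c: "y1 \<in> configs d (Ad d)" using x by (auto simp: configs_def y1_def Ad_def)
    have y2c: "y2 \<in> configs d (Ad d)" using y1c by (auto simp: configs_def y2_def Ad_def)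
    have "cdist d x y1 \<le> (1/2) ^ Suc R" by (rule cdist_le) (simp add: y1_def)
    then have y1B: "y1 \<in> cball_c d (Ad d) x \<delta>" using y1c Rd by (simp add: cball_c_def)
    have "cdist d x y2 \<le> (1/2) ^ Suc R" by (rule cdist_le) (use lenf in \<open>auto simp: y2_def y1_def\<close>)
    then have y2B: "y2 \<in> cball_c d (Ad d) x \<delta>" using y2c Rd by (simp add: cball_c_def)
    have far: "(Phi d ^^ L) y \<notin> cball_c d (Ad d) ((Phi d ^^ L) x) \<epsilon>"
      if ne: "(Phi d ^^ L) y g \<noteq> (Phi d ^^ L) x g" for y
    proof
      assume "(Phi d ^^ L) y \<in> cball_c d (Ad d) ((Phi d ^^ L) x) \<epsilon>"
      then have c: "cdist d ((Phi d ^^ L) x) ((Phi d ^^ L) y) \<le> \<epsilon>" by (simp add: cball_c_def)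
      have "(1/2) ^ length g \<le> cdist d ((Phi d ^^ L) x) ((Phi d ^^ L) y)"
        by (rule cdist_ge[of g d "(Phi d ^^ L) x" "(Phi d ^^ L) y", OF gc]) (use ne in auto)
      moreover have "\<epsilon> < (1/2) ^ length g" by (simp add: \<epsilon>_def)
      ultimately show False using c by linarith
    qed
    show ?thesis
    proof (cases "(Phi d ^^ L) y1 g = (Phi d ^^ L) x g")
      case True
      then have "(Phi d ^^ L) y2 g \<noteq> (Phi d ^^ L) x g" using dif by simp
      then show ?thesis using far y2B by blast
    next
      case False
      then show ?thesis using far y1B by blast
    qed
  qed
  show ?thesis
  proof
    assume "equicont_point d (Ad d) (Phi d) x"
    then obtain \<delta> where dp: "\<delta> > 0"
      and H: "\<forall>t. (Phi d ^^ t) ` cball_c d (Ad d) x \<delta> \<subseteq> cball_c d (Ad d) ((Phi d ^^ t) x) \<epsilon>"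
      using epos unfolding equicont_point_def by blast
    obtain t y where "y \<in> cball_c d (Ad d) x \<delta>" "(Phi d ^^ t) y \<notin> cball_c d (Ad d) ((Phi d ^^ t) x) \<epsilon>"
      using main[OF dp] by blast
    then show False using H by blast
  qed
qed

theorem corollary2:
  fixes d :: nat
  assumes "d \<ge> 2"
  shows "\<exists>(A::nat set) (S::fgword set) (\<mu>::(fgword \<Rightarrow> nat) \<Rightarrow> nat).
           finite A \<and> A \<noteq> {} \<and> finite S \<and> S \<subseteq> fg_carrier d \<and> local_rule A S \<mu> \<and>
           \<not> sensitive d A (ca S \<mu>) \<and>
           \<not> (\<exists>x \<in> configs d A. equicont_point d A (ca S \<mu>) x)"
proof (intro exI conjI)
  show "finite (Ad d)" by (simp add: Ad_def)
  have "0 \<in> Ad d" by (simp add: Ad_def)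
  then show "Ad d \<noteq> {}" by blast
  show "finite (Sd d)" by (rule finite_Sd)
  show "Sd d \<subseteq> fg_carrier d" by (rule Sd_carrier)
  show "local_rule (Ad d) (Sd d) (mu d)" by (rule local_rule_mu)
  show "\<not> sensitive d (Ad d) (ca (Sd d) (mu d))" by (rule not_sensitive)
  show "\<not> (\<exists>x \<in> configs d (Ad d). equicont_point d (Ad d) (ca (Sd d) (mu d)) x)"
    using no_equicont[OF assms] by blast
qed


end
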